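(* Let $K$ be a field of characteristic zero and let $A_2$ be either $K\langle x,y\rangle$ or $K[x,y]$. Let $r=x+w(x,y)$, where $w(x,y)$ belongs to the two-sided ideal of $A_2$ generated by $y$ and $w(x,y)\notin K[y]$. Let $\pi$ be the endomorphism of $A_2$ (a retraction onto $K[r]$) defined by $\pi(x)=x+w(x,y)$, $\pi(y)=0$, and let $f\in K[t]\setminus K$. Then $\pi$ does not preserve the automorphic orbit of $f(r)$; that is, there is an automorphism $\alpha$ of $A_2$ such that $\pi(\alpha(f(r)))\neq\beta(f(r))$ for every automorphism $\beta$ of $A_2$.
   Context: Endomorphisms and automorphisms are $K$-algebra ones. The automorphic orbit of an element $q$ is $\{\beta(q):\beta\in\mathrm{Aut}(A_2)\}$, and an endomorphism preserves it if it maps this set into itself. *)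

theory Defs
  imports "HOL-Library.Poly_Mapping" "HOL-Computational_Algebra.Polynomial"
begin

(* Polynomial-type algebras over K are modelled as finitely supported maps
   from monomials 'm to coefficients 'a, with convolution product.
   For the free algebra K<x,y> the monomials are words over {x,y}
   (concatenation monoid); for K[x,y] they are exponent vectors bool =>0 nat. *)

datatype fword = FW "bool list"

instantiation fword :: monoid_add
begin
definition zero_fword :: fword where "zero_fword = FW []"
fun plus_fword :: "fword \<Rightarrow> fword \<Rightarrow> fword" where
  "plus_fword (FW u) (FW v) = FW (u @ v)"
instance
proof
  fix a b c :: fword
  show "a + b + c = a + (b + c)" by (cases a; cases b; cases c) simp
  show "0 + a = a" by (cases a) (simp add: zero_fword_def)
  show "a + 0 = a" by (cases a) (simp add: zero_fword_def)
qed
end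

type_synonym 'a freealg = "fword \<Rightarrow>\<^sub>0 'a"
(* commutative polynomial algebra K[x,y]; False ~ x, True ~ y *)
type_synonym 'a polyalg = "(bool \<Rightarrow>\<^sub>0 nat) \<Rightarrow>\<^sub>0 'a"

definition X_free :: "'a::field freealg" where "X_free = Poly_Mapping.single (FW [False]) 1"
definition Y_free :: "'a::field freealg" where "Y_free = Poly_Mapping.single (FW [True]) 1"
definition X_comm :: "'a::field polyalg" where "X_comm = Poly_Mapping.single (Poly_Mapping.single False 1) 1"
definition Y_comm :: "'a::field polyalg" where "Y_comm = Poly_Mapping.single (Poly_Mapping.single True 1) 1"

definition kc :: "'a::field \<Rightarrow> ('m::monoid_add \<Rightarrow>\<^sub>0 'a)" where
  "kc c = Poly_Mapping.single 0 c"

definition kalg_endo :: "(('m::monoid_add \<Rightarrow>\<^sub>0 'a::field) \<Rightarrow> ('m \<Rightarrow>\<^sub>0 'a)) \<Rightarrow> bool" where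
  "kalg_endo \<phi> \<longleftrightarrow> (\<forall>a b. \<phi> (a + b) = \<phi> a + \<phi> b) \<and> (\<forall>a b. \<phi> (a * b) = \<phi> a * \<phi> b)
     \<and> \<phi> 1 = 1 \<and> (\<forall>c a. \<phi> (kc c * a) = kc c * \<phi> a)"

definition kalg_aut :: "(('m::monoid_add \<Rightarrow>\<^sub>0 'a::field) \<Rightarrow> ('m \<Rightarrow>\<^sub>0 'a)) \<Rightarrow> bool" where
  "kalg_aut \<phi> \<longleftrightarrow> kalg_endo \<phi> \<and> bij \<phi>"

definition aut_orbit :: "('m::monoid_add \<Rightarrow>\<^sub>0 'a::field) \<Rightarrow> ('m \<Rightarrow>\<^sub>0 'a) set" where
  "aut_orbit q = {\<beta> q | \<beta>. kalg_aut \<beta>}"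

definition peval :: "'a::field poly \<Rightarrow> ('m::monoid_add \<Rightarrow>\<^sub>0 'a) \<Rightarrow> ('m \<Rightarrow>\<^sub>0 'a)" where
  "peval f r = (\<Sum>i\<le>degree f. kc (coeff f i) * r ^ i)"

definition ideal2_gen :: "('m::monoid_add \<Rightarrow>\<^sub>0 'a::field) \<Rightarrow> ('m \<Rightarrow>\<^sub>0 'a) set" where
  "ideal2_gen y = {w. \<exists>ps. w = sum_list (map (\<lambda>(a, b). a * y * b) ps)}"

definition K_sub :: "('m::monoid_add \<Rightarrow>\<^sub>0 'a::field) \<Rightarrow> ('m \<Rightarrow>\<^sub>0 'a) set" where
  "K_sub y = {peval g y | g. True}"

definition orbit_claim :: "('m::monoid_add \<Rightarrow>\<^sub>0 'a::field) \<Rightarrow> ('m \<Rightarrow>\<^sub>0 'a) \<Rightarrow> bool" where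
  "orbit_claim x y \<longleftrightarrow>
    (\<forall>w \<pi> (f :: 'a poly).
       w \<in> ideal2_gen y \<longrightarrow> w \<notin> K_sub y \<longrightarrow>
       kalg_endo \<pi> \<longrightarrow> \<pi> x = x + w \<longrightarrow> \<pi> y = 0 \<longrightarrow>
       degree f > 0 \<longrightarrow>
       (\<exists>\<alpha>. kalg_aut \<alpha> \<and> \<pi> (\<alpha> (peval f (x + w))) \<notin> aut_orbit (peval f (x + w))))"

end

theory Submission
  imports Defs
begin


definition evalh :: "('a::zero \<Rightarrow> 'r::semiring_1) \<Rightarrow> ('m \<Rightarrow> 'r) \<Rightarrow> ('m \<Rightarrow>\<^sub>0 'a) \<Rightarrow> 'r" where
  "evalh e mo g = (\<Sum>\<mu>\<in>Poly_Mapping.keys g. e (Poly_Mapping.lookup g \<mu>) * mo \<mu>)"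

lemma pm_expansion:
  "g = (\<Sum>\<mu>\<in>Poly_Mapping.keys g. Poly_Mapping.single \<mu> (Poly_Mapping.lookup g \<mu>))"
proof -
  have *: "finite I \<Longrightarrow> Poly_Mapping.lookup (\<Sum>i\<in>I. Poly_Mapping.single i (Poly_Mapping.lookup g i)) j =
            (if j \<in> I then Poly_Mapping.lookup g j else 0)" for I j
    by (induction I rule: finite_induct) (auto simp: lookup_single lookup_add when_def)
  show ?thesis
    by (rule poly_mapping_eqI) (simp add: * in_keys_iff)
qed

lemma evalh_superset:
  assumes "finite S" "Poly_Mapping.keys g \<subseteq> S" "e 0 = 0"
  shows "evalh e mo g = (\<Sum>\<mu>\<in>S. e (Poly_Mapping.lookup g \<mu>) * mo \<mu>)"
  unfolding evalh_def
  by (rule sum.mono_neutral_left) (use assms in \<open>auto simp: in_keys_iff\<close>)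

lemma evalh_add:
  fixes e :: "'a::monoid_add \<Rightarrow> 'r::semiring_1"
  assumes "\<And>a b. e (a + b) = e a + e b" "e 0 = 0"
  shows "evalh e mo (g + h) = evalh e mo g + evalh e mo h"
proof -
  let ?S = "Poly_Mapping.keys g \<union> Poly_Mapping.keys h"
  have f: "finite ?S" by simp
  have "evalh e mo (g + h) = (\<Sum>\<mu>\<in>?S. e (Poly_Mapping.lookup (g+h) \<mu>) * mo \<mu>)"
    by (rule evalh_superset) (use assms keys_add[of g h] in auto)
  also have "\<dots> = (\<Sum>\<mu>\<in>?S. e (Poly_Mapping.lookup g \<mu>) * mo \<mu>) + (\<Sum>\<mu>\<in>?S. e (Poly_Mapping.lookup h \<mu>) * mo \<mu>)"
    by (simp add: lookup_add assms distrib_right sum.distrib)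
  also have "\<dots> = evalh e mo g + evalh e mo h"
    using evalh_superset[OF f, of g e mo] evalh_superset[OF f, of h e mo] assms by auto
  finally show ?thesis .
qed

lemma evalh_zero [simp]: "evalh e mo 0 = 0"
  by (simp add: evalh_def)

lemma evalh_single:
  assumes "e 0 = 0"
  shows "evalh e mo (Poly_Mapping.single \<mu> c) = e c * mo \<mu>"
  using evalh_superset[of "{\<mu>}" "Poly_Mapping.single \<mu> c" e mo] assms by auto

lemma evalh_sum:
  fixes e :: "'a::comm_monoid_add \<Rightarrow> 'r::semiring_1"
  assumes "\<And>a b. e (a + b) = e a + e b" "e 0 = 0"
  shows "evalh e mo (\<Sum>i\<in>I. F i) = (\<Sum>i\<in>I. evalh e mo (F i))"
  by (induction I rule: infinite_finite_induct) (simp_all add: evalh_add[OF assms])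

lemma evalh_mult:
  fixes e :: "'a::semiring_1 \<Rightarrow> 'r::semiring_1" and mo :: "'m::monoid_add \<Rightarrow> 'r"
  assumes add: "\<And>a b. e (a + b) = e a + e b" and e0: "e 0 = 0"
    and mul: "\<And>a b. e (a * b) = e a * e b"
    and moadd: "\<And>a b. mo (a + b) = mo a * mo b"
    and central: "\<And>c \<mu>. e c * mo \<mu> = mo \<mu> * e c"
  shows "evalh e mo (g * h) = evalh e mo g * evalh e mo h"
proof -
  let ?A = "Poly_Mapping.keys g" and ?B = "Poly_Mapping.keys h"
  have "g * h = (\<Sum>\<mu>\<in>?A. Poly_Mapping.single \<mu> (Poly_Mapping.lookup g \<mu>)) *
                (\<Sum>\<nu>\<in>?B. Poly_Mapping.single \<nu> (Poly_Mapping.lookup h \<nu>))"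
    using pm_expansion[of g] pm_expansion[of h] by simp
  also have "\<dots> = (\<Sum>\<mu>\<in>?A. \<Sum>\<nu>\<in>?B. Poly_Mapping.single (\<mu> + \<nu>) (Poly_Mapping.lookup g \<mu> * Poly_Mapping.lookup h \<nu>))"
    by (simp add: sum_product mult_single)
  finally have gh: "g * h = \<dots>" .
  have "evalh e mo (g * h) = (\<Sum>\<mu>\<in>?A. \<Sum>\<nu>\<in>?B. e (Poly_Mapping.lookup g \<mu> * Poly_Mapping.lookup h \<nu>) * mo (\<mu> + \<nu>))"
    unfolding gh by (simp add: evalh_sum[OF add e0] evalh_single[where e=e, OF e0])
  also have "\<dots> = (\<Sum>\<mu>\<in>?A. \<Sum>\<nu>\<in>?B. (e (Poly_Mapping.lookup g \<mu>) * mo \<mu>) * (e (Poly_Mapping.lookup h \<nu>) * mo \<nu>))"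
  proof (intro sum.cong refl)
    fix \<mu> \<nu>
    have "e (Poly_Mapping.lookup h \<nu>) * mo \<mu> = mo \<mu> * e (Poly_Mapping.lookup h \<nu>)" by (rule central)
    then show "e (Poly_Mapping.lookup g \<mu> * Poly_Mapping.lookup h \<nu>) * mo (\<mu> + \<nu>) =
        (e (Poly_Mapping.lookup g \<mu>) * mo \<mu>) * (e (Poly_Mapping.lookup h \<nu>) * mo \<nu>)"
      by (simp add: mul moadd mult.assoc) (metis mult.assoc)
  qed
  also have "\<dots> = evalh e mo g * evalh e mo h"
    by (simp add: evalh_def sum_product)
  finally show ?thesis .
qed

lemma evalh_one:
  assumes "e 0 = 0" "e 1 = 1" "mo 0 = 1"
  shows "evalh e mo (1 :: 'm::monoid_add \<Rightarrow>\<^sub>0 'a::zero_neq_one) = 1"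
proof -
  have "(1 :: 'm \<Rightarrow>\<^sub>0 'a) = Poly_Mapping.single 0 1" by simp
  then show ?thesis using evalh_single[of e mo 0 1] assms by simp
qed

lemma kc_add: "kc (a + b) = kc a + kc b" by (simp add: kc_def single_add)
lemma kc_mult: "kc (a * b) = (kc a * kc b :: 'm::monoid_add \<Rightarrow>\<^sub>0 'a::field)"
  by (simp add: kc_def mult_single)
lemma kc_0 [simp]: "kc 0 = 0" by (simp add: kc_def)
lemma kc_1 [simp]: "kc 1 = 1" by (simp add: kc_def)

lemma kc_central: "kc c * g = g * (kc c :: 'm::monoid_add \<Rightarrow>\<^sub>0 'a::field)"
proof -
  have "kc c * g = kc c * (\<Sum>\<mu>\<in>Poly_Mapping.keys g. Poly_Mapping.single \<mu> (Poly_Mapping.lookup g \<mu>))"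
    using pm_expansion[of g] by simp
  also have "\<dots> = (\<Sum>\<mu>\<in>Poly_Mapping.keys g. Poly_Mapping.single \<mu> (Poly_Mapping.lookup g \<mu>)) * kc c"
    by (simp add: sum_distrib_left sum_distrib_right kc_def mult_single mult.commute)
  also have "\<dots> = g * kc c" using pm_expansion[of g] by simp
  finally show ?thesis .
qed

lemma kc_swap: "kc c * (g * h) = g * (kc c * h :: 'm::monoid_add \<Rightarrow>\<^sub>0 'a::field)"
  by (metis mult.assoc kc_central)

context
  fixes \<phi> :: "('m::monoid_add \<Rightarrow>\<^sub>0 'a::field) \<Rightarrow> ('m \<Rightarrow>\<^sub>0 'a)"
  assumes E: "kalg_endo \<phi>"
begin

lemma endo_add: "\<phi> (a + b) = \<phi> a + \<phi> b" using E by (simp add: kalg_endo_def)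
lemma endo_mult: "\<phi> (a * b) = \<phi> a * \<phi> b" using E by (simp add: kalg_endo_def)
lemma endo_one: "\<phi> 1 = 1" using E by (simp add: kalg_endo_def)
lemma endo_zero: "\<phi> 0 = 0"
  using endo_add[of 0 0] by simp
lemma endo_kc: "\<phi> (kc c) = kc c"
  using E endo_one unfolding kalg_endo_def by (metis mult.right_neutral)
lemma endo_minus: "\<phi> (- a) = - \<phi> a"
  using endo_add[of a "-a"] endo_zero minus_unique[of "\<phi> a" "\<phi> (-a)"] by simp
lemma endo_diff: "\<phi> (a - b) = \<phi> a - \<phi> b"
  using endo_add[of a "-b"] endo_minus[of b] by simp
lemma endo_power: "\<phi> (a ^ n) = \<phi> a ^ n"
  by (induction n) (simp_all add: endo_one endo_mult)
lemma endo_sum: "\<phi> (\<Sum>i\<in>I. F i) = (\<Sum>i\<in>I. \<phi> (F i))"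
  by (induction I rule: infinite_finite_induct) (simp_all add: endo_zero endo_add)
lemma endo_sum_list: "\<phi> (sum_list xs) = sum_list (map \<phi> xs)"
  by (induction xs) (simp_all add: endo_zero endo_add)
lemma endo_peval: "\<phi> (peval f g) = peval f (\<phi> g)"
  unfolding peval_def by (simp add: endo_sum endo_mult endo_kc endo_power)

end

lemma aut_inv_endo:
  assumes "kalg_aut \<beta>"
  shows "kalg_endo (inv \<beta>)"
proof -
  have E: "kalg_endo \<beta>" and B: "bij \<beta>" using assms by (auto simp: kalg_aut_def)
  have inj: "inj \<beta>" using B bij_is_inj by auto
  have s: "\<beta> (inv \<beta> a) = a" for a by (meson B bij_is_surj surj_f_inv_f)
  show ?thesis unfolding kalg_endo_def
  proof (intro conjI allI)
    fix a b
    show "inv \<beta> (a + b) = inv \<beta> a + inv \<beta> b"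
      by (rule injD[OF inj]) (simp add: s endo_add[OF E])
    show "inv \<beta> (a * b) = inv \<beta> a * inv \<beta> b"
      by (rule injD[OF inj]) (simp add: s endo_mult[OF E])
  next
    show "inv \<beta> 1 = 1" by (rule injD[OF inj]) (simp add: s endo_one[OF E])
  next
    fix c a
    show "inv \<beta> (kc c * a) = kc c * inv \<beta> a"
      by (rule injD[OF inj]) (simp add: s endo_mult[OF E] endo_kc[OF E])
  qed
qed

lemma peval_upto:
  assumes "degree f \<le> N"
  shows "peval f g = (\<Sum>i\<le>N. kc (coeff f i) * g ^ i)"
  unfolding peval_def
  by (rule sum.mono_neutral_left) (use assms in \<open>auto simp: coeff_eq_0\<close>)

lemma peval_0 [simp]: "peval 0 g = 0" by (simp add: peval_def)

lemma peval_add: "peval (p + q) g = peval p g + peval q g"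
proof -
  let ?N = "max (degree p) (degree q)"
  have "degree (p + q) \<le> ?N" by (rule degree_add_le) auto
  then show ?thesis
    using peval_upto[of p ?N g] peval_upto[of q ?N g] peval_upto[of "p+q" ?N g]
    by (simp add: kc_add distrib_right sum.distrib)
qed

lemma peval_pCons: "peval (pCons a p) g = kc a + g * peval p (g :: 'm::monoid_add \<Rightarrow>\<^sub>0 'a::field)"
proof -
  have "peval (pCons a p) g = (\<Sum>i\<le>Suc (degree p). kc (coeff (pCons a p) i) * g ^ i)"
    by (rule peval_upto) (rule degree_pCons_le)
  also have "\<dots> = kc a + (\<Sum>i\<le>degree p. kc (coeff p i) * g ^ Suc i)"
    unfolding sum.atMost_Suc_shift by simp
  also have "\<dots> = kc a + g * peval p g"
    unfolding peval_def sum_distrib_left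
    by (simp add: kc_swap)
  finally show ?thesis .
qed

lemma peval_smult: "peval (smult c p) g = kc c * peval p (g :: 'm::monoid_add \<Rightarrow>\<^sub>0 'a::field)"
  by (induction p) (simp_all add: peval_pCons kc_mult distrib_left kc_swap)

lemma peval_mult: "peval (p * q) g = peval p g * peval q (g :: 'm::monoid_add \<Rightarrow>\<^sub>0 'a::field)"
proof (induction p)
  case 0 then show ?case by simp
next
  case (pCons a p)
  have "peval (pCons a p * q) g = peval (smult a q + pCons 0 (p * q)) g" by simp
  also have "\<dots> = kc a * peval q g + g * (peval p g * peval q g)"
    by (simp add: peval_add peval_smult peval_pCons pCons)
  also have "\<dots> = peval (pCons a p) g * peval q g"
    by (simp add: peval_pCons distrib_right mult.assoc)
  finally show ?case .
qed

lemma peval_const: "peval [:c:] g = kc c"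
  by (simp add: peval_pCons)

lemma peval_X: "peval [:0, 1:] g = g"
  by (simp add: peval_pCons)




lemma evalhP_add:
  "evalh (\<lambda>c. [:c:]) mo (g + h) = evalh (\<lambda>c. [:c:]) mo g + evalh (\<lambda>c. [:c:]) mo (h :: 'm \<Rightarrow>\<^sub>0 'a::field)"
  by (rule evalh_add) simp_all

lemma evalhP_mult:
  fixes mo :: "'m::monoid_add \<Rightarrow> 'a::field poly"
  assumes "\<And>a b. mo (a + b) = mo a * mo b"
  shows "evalh (\<lambda>c. [:c:]) mo (g * h) = evalh (\<lambda>c. [:c:]) mo g * evalh (\<lambda>c. [:c:]) mo h"
  by (rule evalh_mult) (simp_all add: assms mult.commute)

lemma evalhP_kc:
  "evalh (\<lambda>c. [:c:]) mo (kc c :: 'm::monoid_add \<Rightarrow>\<^sub>0 'a::field) = [:c:] * mo 0"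
  unfolding kc_def by (rule evalh_single) simp

locale alg2 =
  fixes X Y :: "'m::monoid_add \<Rightarrow>\<^sub>0 'a::field"
    and mx my :: 'm and xc yc :: "'m \<Rightarrow> nat"
    and subst :: "('m \<Rightarrow>\<^sub>0 'a) \<Rightarrow> ('m \<Rightarrow>\<^sub>0 'a) \<Rightarrow> ('m \<Rightarrow>\<^sub>0 'a) \<Rightarrow> ('m \<Rightarrow>\<^sub>0 'a)"
  assumes X_eq: "X = Poly_Mapping.single mx 1" and Y_eq: "Y = Poly_Mapping.single my 1"
    and xc_add: "\<And>a b. xc (a + b) = xc a + xc b" and yc_add: "\<And>a b. yc (a + b) = yc a + yc b"
    and xc_0: "xc 0 = 0" and yc_0: "yc 0 = 0"
    and cnt: "xc mx = 1" "yc mx = 0" "xc my = 0" "yc my = 1"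
    and gen: "\<And>P g. (\<And>c. P (kc c)) \<Longrightarrow> P X \<Longrightarrow> P Y \<Longrightarrow> (\<And>a b. P a \<Longrightarrow> P b \<Longrightarrow> P (a + b))
       \<Longrightarrow> (\<And>a b. P a \<Longrightarrow> P b \<Longrightarrow> P (a * b)) \<Longrightarrow> P g"
    and subst_endo: "\<And>sx sy. kalg_endo (subst sx sy)"
    and subst_X: "\<And>sx sy. subst sx sy X = sx" and subst_Y: "\<And>sx sy. subst sx sy Y = sy"
begin

lemma hom_eq:
  fixes F G :: "('m \<Rightarrow>\<^sub>0 'a) \<Rightarrow> 'r::ring_1"
  assumes "\<And>a b. F (a + b) = F a + F b" "\<And>a b. F (a * b) = F a * F b"
    "\<And>a b. G (a + b) = G a + G b" "\<And>a b. G (a * b) = G a * G b"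
    "\<And>c. F (kc c) = G (kc c)" "F X = G X" "F Y = G Y"
  shows "F g = G g"
  by (rule gen[of "\<lambda>g. F g = G g"]) (simp_all add: assms)

definition eps :: "('m \<Rightarrow>\<^sub>0 'a) \<Rightarrow> 'a poly" where
  "eps = evalh (\<lambda>c. [:c:]) (\<lambda>\<mu>. if yc \<mu> = 0 then monom 1 (xc \<mu>) else 0)"

definition psi :: "nat \<Rightarrow> ('m \<Rightarrow>\<^sub>0 'a) \<Rightarrow> 'a poly" where
  "psi k = evalh (\<lambda>c. [:c:]) (\<lambda>\<mu>. monom 1 (k * xc \<mu> + yc \<mu>))"

lemma eps_add: "eps (a + b) = eps a + eps b"
  unfolding eps_def by (rule evalhP_add)

lemma eps_mult: "eps (a * b) = eps a * eps b"
  unfolding eps_def by (rule evalhP_mult) (simp add: xc_add yc_add mult_monom)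

lemma eps_kc: "eps (kc c) = [:c:]"
  unfolding eps_def by (simp add: evalhP_kc xc_0 yc_0)

lemma eps_X: "eps X = monom 1 1"
  unfolding eps_def X_eq by (simp add: evalh_single cnt)

lemma eps_Y: "eps Y = 0"
  unfolding eps_def Y_eq by (simp add: evalh_single cnt)

lemma eps_zero: "eps 0 = 0" by (simp add: eps_def)

lemma eps_power: "eps (a ^ n) = eps a ^ n"
proof (induction n)
  case 0
  have "eps 1 = 1" using eps_kc[of 1] by simp
  then show ?case by simp
next
  case (Suc n) then show ?case by (simp add: eps_mult)
qed

lemma psi_add: "psi k (a + b) = psi k a + psi k b"
  unfolding psi_def by (rule evalhP_add)

lemma psi_mult: "psi k (a * b) = psi k a * psi k b"
  unfolding psi_def by (rule evalhP_mult) (simp add: xc_add yc_add mult_monom algebra_simps)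

lemma psi_kc: "psi k (kc c) = [:c:]"
  unfolding psi_def by (simp add: evalhP_kc xc_0 yc_0)

lemma psi_X: "psi k X = monom 1 k"
  unfolding psi_def X_eq by (simp add: evalh_single cnt)

lemma psi_Y: "psi k Y = monom 1 1"
  unfolding psi_def Y_eq by (simp add: evalh_single cnt)

lemma eps_peval: "eps (peval f h) = f \<circ>\<^sub>p eps h"
  by (induction f) (simp_all add: peval_pCons eps_add eps_mult eps_kc eps_zero pcompose_pCons)

lemma ideal_eps:
  assumes "w \<in> ideal2_gen Y" shows "eps w = 0"
proof -
  obtain ps where w: "w = sum_list (map (\<lambda>(a, b). a * Y * b) ps)"
    using assms by (auto simp: ideal2_gen_def)
  have "eps (sum_list (map (\<lambda>(a, b). a * Y * b) ps)) = 0"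
    by (induction ps) (auto simp: eps_zero eps_add eps_mult eps_Y)
  then show ?thesis using w by simp
qed

definition good :: "('m \<Rightarrow>\<^sub>0 'a) \<Rightarrow> bool" where
  "good g \<longleftrightarrow> (\<forall>\<mu>\<in>Poly_Mapping.keys g. 1 \<le> yc \<mu>)"

lemma good_aYb: "good (a * Y * b)"
  unfolding good_def
proof
  fix \<mu> assume "\<mu> \<in> Poly_Mapping.keys (a * Y * b)"
  then obtain u v where "\<mu> = u + v" "u \<in> Poly_Mapping.keys (a * Y)"
    using keys_mult[of "a * Y" b] by blast
  moreover from this(2) obtain s t where "u = s + t" "t \<in> Poly_Mapping.keys Y"
    using keys_mult[of a Y] by blast
  moreover have "Poly_Mapping.keys Y = {my}" by (simp add: Y_eq)
  ultimately show "1 \<le> yc \<mu>" by (simp add: yc_add cnt)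
qed

lemma good_add: "good a \<Longrightarrow> good b \<Longrightarrow> good (a + b)"
  unfolding good_def using keys_add[of a b] by blast

lemma ideal_good:
  assumes "w \<in> ideal2_gen Y" shows "good w"
proof -
  obtain ps where w: "w = sum_list (map (\<lambda>(a, b). a * Y * b) ps)"
    using assms by (auto simp: ideal2_gen_def)
  have "good (sum_list (map (\<lambda>(a, b). a * Y * b) ps))"
  proof (induction ps)
    case Nil show ?case by (simp add: good_def)
  next
    case (Cons p ps) then show ?case by (cases p) (simp add: good_add good_aYb)
  qed
  then show ?thesis using w by simp
qed

lemma psi_coeff:
  assumes "good w" "\<And>\<mu>. \<mu> \<in> Poly_Mapping.keys w \<Longrightarrow> yc \<mu> < k"
  shows "coeff (psi k w) k = 0"
proof -
  have "coeff (psi k w) k = (\<Sum>\<mu>\<in>Poly_Mapping.keys w. coeff (monom (Poly_Mapping.lookup w \<mu>) (k * xc \<mu> + yc \<mu>)) k)"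
    unfolding psi_def evalh_def by (simp add: coeff_sum smult_monom)
  also have "\<dots> = 0"
  proof (rule sum.neutral, rule ballI)
    fix \<mu> assume m: "\<mu> \<in> Poly_Mapping.keys w"
    have y1: "1 \<le> yc \<mu>" using assms(1) m by (auto simp: good_def)
    have yk: "yc \<mu> < k" using assms(2) m .
    have "k * xc \<mu> + yc \<mu> \<noteq> k"
    proof (cases "xc \<mu>")
      case 0 then show ?thesis using yk by simp
    next
      case (Suc n) then show ?thesis using y1 by simp
    qed
    then show "coeff (monom (Poly_Mapping.lookup w \<mu>) (k * xc \<mu> + yc \<mu>)) k = 0"
      by (simp add: coeff_monom)
  qed
  finally show ?thesis .
qed

end




context alg2 begin

lemma main: "orbit_claim X Y"
  unfolding orbit_claim_def
proof (intro allI impI)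
  fix w \<pi> and f :: "'a poly"
  assume hw: "w \<in> ideal2_gen Y" and "w \<notin> K_sub Y" and E\<pi>: "kalg_endo \<pi>"
    and \<pi>X: "\<pi> X = X + w" and \<pi>Y: "\<pi> Y = 0" and degf: "0 < degree f"
  define r where "r = X + w"
  define k where "k = Max (insert 0 (yc ` Poly_Mapping.keys w)) + 2"
  have k2: "2 \<le> k" unfolding k_def by simp
  have kgt: "yc \<mu> < k" if "\<mu> \<in> Poly_Mapping.keys w" for \<mu>
  proof -
    have "yc \<mu> \<le> Max (insert 0 (yc ` Poly_Mapping.keys w))"
      using that by (intro Max_ge) auto
    then show ?thesis unfolding k_def by simp
  qed
  define \<alpha> where "\<alpha> = subst (Y + X ^ k) X"
  define \<alpha>' where "\<alpha>' = subst Y (X - Y ^ k)"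
  have E\<alpha>: "kalg_endo \<alpha>" and E\<alpha>': "kalg_endo \<alpha>'" unfolding \<alpha>_def \<alpha>'_def by (rule subst_endo)+
  have \<alpha>X: "\<alpha> X = Y + X ^ k" and \<alpha>Y: "\<alpha> Y = X" unfolding \<alpha>_def by (simp_all add: subst_X subst_Y)
  have \<alpha>'X: "\<alpha>' X = Y" and \<alpha>'Y: "\<alpha>' Y = X - Y ^ k" unfolding \<alpha>'_def by (simp_all add: subst_X subst_Y)
  have c1: "\<alpha> (\<alpha>' g) = g" for g
    by (rule hom_eq[where F="\<lambda>g. \<alpha> (\<alpha>' g)" and G="\<lambda>g. g"])
       (simp_all add: endo_add[OF E\<alpha>] endo_add[OF E\<alpha>'] endo_mult[OF E\<alpha>] endo_mult[OF E\<alpha>']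
         endo_kc[OF E\<alpha>] endo_kc[OF E\<alpha>'] \<alpha>'X \<alpha>'Y endo_diff[OF E\<alpha>] endo_power[OF E\<alpha>] \<alpha>X \<alpha>Y)
  have c2: "\<alpha>' (\<alpha> g) = g" for g
    by (rule hom_eq[where F="\<lambda>g. \<alpha>' (\<alpha> g)" and G="\<lambda>g. g"])
       (simp_all add: endo_add[OF E\<alpha>] endo_add[OF E\<alpha>'] endo_mult[OF E\<alpha>] endo_mult[OF E\<alpha>']
         endo_kc[OF E\<alpha>] endo_kc[OF E\<alpha>'] \<alpha>'X \<alpha>'Y endo_power[OF E\<alpha>'] \<alpha>X \<alpha>Y)
  have "bij \<alpha>" by (rule o_bij[where g=\<alpha>']) (auto simp: c1 c2)
  with E\<alpha> have A\<alpha>: "kalg_aut \<alpha>" by (simp add: kalg_aut_def)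
  have pi_eq: "\<pi> g = peval (eps g) r" for g
    by (rule hom_eq[where F=\<pi> and G="\<lambda>g. peval (eps g) r"])
       (simp_all add: endo_add[OF E\<pi>] endo_mult[OF E\<pi>] endo_kc[OF E\<pi>] eps_add eps_mult peval_add peval_mult
        eps_kc peval_const eps_X eps_Y \<pi>X \<pi>Y r_def monom_altdef peval_X)
  have eps_alpha: "eps (\<alpha> g) = psi k g" for g
    by (rule hom_eq[where F="\<lambda>g. eps (\<alpha> g)" and G="psi k"])
       (simp_all add: endo_add[OF E\<alpha>] endo_mult[OF E\<alpha>] endo_kc[OF E\<alpha>] eps_add eps_mult psi_add psi_mult
        eps_kc psi_kc \<alpha>X \<alpha>Y eps_X eps_Y psi_X psi_Y eps_power monom_power)
  define p where "p = eps (\<alpha> r)"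
  have "coeff p k = 1"
  proof -
    have "p = monom 1 k + psi k w" unfolding p_def eps_alpha r_def by (simp add: psi_add psi_X)
    moreover have "coeff (psi k w) k = 0" by (rule psi_coeff[OF ideal_good[OF hw] kgt])
    ultimately show ?thesis by simp
  qed
  then have degp: "k \<le> degree p" by (intro le_degree) simp
  have eps_r: "eps r = [:0, 1:]"
    by (simp add: r_def eps_add eps_X ideal_eps[OF hw] monom_altdef)
  show "\<exists>\<alpha>. kalg_aut \<alpha> \<and> \<pi> (\<alpha> (peval f (X + w))) \<notin> aut_orbit (peval f (X + w))"
  proof (intro exI conjI notI)
    show "kalg_aut \<alpha>" by (rule A\<alpha>)
  next
    assume "\<pi> (\<alpha> (peval f (X + w))) \<in> aut_orbit (peval f (X + w))"
    then obtain \<beta> where A\<beta>: "kalg_aut \<beta>" and eq: "\<pi> (\<alpha> (peval f r)) = \<beta> (peval f r)"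
      unfolding aut_orbit_def r_def by auto
    define \<gamma> where "\<gamma> = inv \<beta>"
    have E\<gamma>: "kalg_endo \<gamma>" unfolding \<gamma>_def by (rule aut_inv_endo[OF A\<beta>])
    have "bij \<beta>" using A\<beta> by (simp add: kalg_aut_def)
    then have \<gamma>\<beta>: "\<gamma> (\<beta> a) = a" for a unfolding \<gamma>_def by (simp add: bij_is_inj)
    have "peval f r = \<gamma> (\<pi> (\<alpha> (peval f r)))" by (simp add: eq \<gamma>\<beta>)
    also have "\<dots> = peval f (\<gamma> (\<pi> (\<alpha> r)))"
      by (simp add: endo_peval[OF E\<alpha>] endo_peval[OF E\<pi>] endo_peval[OF E\<gamma>])
    also have "\<pi> (\<alpha> r) = peval p r" unfolding p_def by (rule pi_eq)
    also have "\<gamma> (peval p r) = peval p (\<gamma> r)" by (rule endo_peval[OF E\<gamma>])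
    finally have "eps (peval f r) = eps (peval f (peval p (\<gamma> r)))" by simp
    then have "f = f \<circ>\<^sub>p (p \<circ>\<^sub>p eps (\<gamma> r))" by (simp add: eps_peval eps_r)
    then have "degree f = degree f * (degree p * degree (eps (\<gamma> r)))"
      by (metis degree_pcompose)
    with degf have "degree p * degree (eps (\<gamma> r)) = 1" by simp
    then have "degree p = 1" by simp
    with degp k2 show False by simp
  qed
qed

end




section \<open>Free algebra\<close>

fun xcF :: "fword \<Rightarrow> nat" where "xcF (FW l) = length (filter Not l)"
fun ycF :: "fword \<Rightarrow> nat" where "ycF (FW l) = length (filter id l)"
fun moF :: "'r::monoid_mult \<Rightarrow> 'r \<Rightarrow> fword \<Rightarrow> 'r" where
  "moF sx sy (FW l) = prod_list (map (\<lambda>b. if b then sy else sx) l)"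

definition substF :: "'a::field freealg \<Rightarrow> 'a freealg \<Rightarrow> 'a freealg \<Rightarrow> 'a freealg" where
  "substF sx sy = evalh kc (moF sx sy)"

lemma moF_add: "moF sx sy (a + b) = moF sx sy a * moF sx sy b"
  by (cases a; cases b) simp

lemma moF_0: "moF sx sy 0 = 1" by (simp add: zero_fword_def)

lemma substF_endo: "kalg_endo (substF sx sy)"
proof -
  have a: "substF sx sy (a + b) = substF sx sy a + substF sx sy b" for a b
    unfolding substF_def by (rule evalh_add) (simp_all add: kc_add)
  have m: "substF sx sy (a * b) = substF sx sy a * substF sx sy b" for a b
    unfolding substF_def by (rule evalh_mult[OF kc_add kc_0 kc_mult moF_add kc_central])
  have c: "substF sx sy (kc c) = kc c" for c
  proof -
    have "evalh kc (moF sx sy) (Poly_Mapping.single 0 c) = kc c * moF sx sy 0" by (rule evalh_single) simp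
    then show ?thesis unfolding substF_def by (simp add: moF_0 kc_def)
  qed
  show ?thesis unfolding kalg_endo_def
    using a m c c[of 1] by simp
qed

lemma substF_X: "substF sx sy X_free = sx"
  unfolding substF_def X_free_def by (simp add: evalh_single)

lemma substF_Y: "substF sx sy Y_free = sy"
  unfolding substF_def Y_free_def by (simp add: evalh_single)

lemma genF:
  fixes P :: "'a::field freealg \<Rightarrow> bool"
  assumes c: "\<And>c. P (kc c)" and x: "P X_free" and y: "P Y_free"
    and a: "\<And>a b. P a \<Longrightarrow> P b \<Longrightarrow> P (a + b)" and m: "\<And>a b. P a \<Longrightarrow> P b \<Longrightarrow> P (a * b)"
  shows "P g"
proof -
  have s1: "P (Poly_Mapping.single (FW l) 1)" for l
  proof (induction l)
    case Nil
    have "Poly_Mapping.single (FW []) (1::'a) = kc 1" by (simp add: kc_def zero_fword_def)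
    then show ?case using c[of 1] by simp
  next
    case (Cons b l)
    have "Poly_Mapping.single (FW (b # l)) (1::'a) = Poly_Mapping.single (FW [b]) 1 * Poly_Mapping.single (FW l) 1"
      by (simp add: mult_single)
    moreover have "P (Poly_Mapping.single (FW [b]) (1::'a))"
      using x y by (cases b) (simp_all add: X_free_def Y_free_def)
    ultimately show ?case using m Cons by simp
  qed
  have s: "P (Poly_Mapping.single \<mu> d)" for \<mu> d
  proof -
    obtain l where "\<mu> = FW l" by (cases \<mu>)
    moreover have "Poly_Mapping.single (FW l) d = kc d * Poly_Mapping.single (FW l) (1::'a)"
      by (simp add: kc_def mult_single zero_fword_def)
    ultimately show ?thesis using m c s1 by simp
  qed
  have "P (\<Sum>\<mu>\<in>I. Poly_Mapping.single \<mu> (Poly_Mapping.lookup g \<mu>))" for I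
  proof (induction I rule: infinite_finite_induct)
    case (infinite A) then show ?case using c[of 0] by simp
  next
    case empty then show ?case using c[of 0] by simp
  next
    case (insert x F) then show ?case using a s by simp
  qed
  from this[of "Poly_Mapping.keys g"] show ?thesis by (simp only: pm_expansion[of g, symmetric])
qed

interpretation free: alg2 X_free Y_free "FW [False]" "FW [True]" xcF ycF substF
proof
  show "\<And>a b. xcF (a + b) = xcF a + xcF b" by (case_tac a; case_tac b) simp
  show "\<And>a b. ycF (a + b) = ycF a + ycF b" by (case_tac a; case_tac b) simp
  show "\<And>P g. (\<And>c. P (kc c)) \<Longrightarrow> P X_free \<Longrightarrow> P Y_free \<Longrightarrow> (\<And>a b. P a \<Longrightarrow> P b \<Longrightarrow> P (a + b))
       \<Longrightarrow> (\<And>a b. P a \<Longrightarrow> P b \<Longrightarrow> P (a * b)) \<Longrightarrow> P g" by (rule genF)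
  show "X_free = Poly_Mapping.single (FW [False]) 1" by (simp add: X_free_def)
  show "Y_free = Poly_Mapping.single (FW [True]) 1" by (simp add: Y_free_def)
  show "\<And>sx sy. substF sx sy X_free = sx" by (rule substF_X)
  show "\<And>sx sy. substF sx sy Y_free = sy" by (rule substF_Y)
  show "\<And>sx sy. kalg_endo (substF sx sy)" by (rule substF_endo)
qed (simp_all add: zero_fword_def)

section \<open>Commutative algebra\<close>

definition moC :: "'r::comm_monoid_mult \<Rightarrow> 'r \<Rightarrow> (bool \<Rightarrow>\<^sub>0 nat) \<Rightarrow> 'r" where
  "moC sx sy \<mu> = sx ^ Poly_Mapping.lookup \<mu> False * sy ^ Poly_Mapping.lookup \<mu> True"

definition substC :: "'a::field polyalg \<Rightarrow> 'a polyalg \<Rightarrow> 'a polyalg \<Rightarrow> 'a polyalg" where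
  "substC sx sy = evalh kc (moC sx sy)"

lemma moC_add: "moC sx sy (a + b) = moC sx sy a * moC sx sy b"
  by (simp add: moC_def lookup_add power_add algebra_simps)

lemma substC_endo: "kalg_endo (substC sx sy)"
proof -
  have a: "substC sx sy (a + b) = substC sx sy a + substC sx sy b" for a b
    unfolding substC_def by (rule evalh_add) (simp_all add: kc_add)
  have m: "substC sx sy (a * b) = substC sx sy a * substC sx sy b" for a b
    unfolding substC_def by (rule evalh_mult[OF kc_add kc_0 kc_mult moC_add kc_central])
  have c: "substC sx sy (kc c) = kc c" for c
  proof -
    have "evalh kc (moC sx sy) (Poly_Mapping.single 0 c) = kc c * moC sx sy 0" by (rule evalh_single) simp
    then show ?thesis unfolding substC_def by (simp add: moC_def kc_def)
  qed
  show ?thesis unfolding kalg_endo_def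
    using a m c c[of 1] by simp
qed

lemma substC_X: "substC sx sy X_comm = sx"
  unfolding substC_def X_comm_def by (simp add: evalh_single moC_def lookup_single when_def)

lemma substC_Y: "substC sx sy Y_comm = sy"
  unfolding substC_def Y_comm_def by (simp add: evalh_single moC_def lookup_single when_def)

lemma genC:
  fixes P :: "'a::field polyalg \<Rightarrow> bool"
  assumes c: "\<And>c. P (kc c)" and x: "P X_comm" and y: "P Y_comm"
    and a: "\<And>a b. P a \<Longrightarrow> P b \<Longrightarrow> P (a + b)" and m: "\<And>a b. P a \<Longrightarrow> P b \<Longrightarrow> P (a * b)"
  shows "P g"
proof -
  have pw: "P (q ^ n)" if "P q" for q n
  proof (induction n)
    case 0 then show ?case using c[of 1] by simp
  next
    case (Suc n) then show ?case using m that by simp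
  qed
  have xp: "X_comm ^ n = Poly_Mapping.single (Poly_Mapping.single False n) (1::'a)" for n
    by (induction n) (simp_all add: X_comm_def mult_single flip: single_add)
  have yp: "Y_comm ^ n = Poly_Mapping.single (Poly_Mapping.single True n) (1::'a)" for n
    by (induction n) (simp_all add: Y_comm_def mult_single flip: single_add)
  have s: "P (Poly_Mapping.single \<mu> d)" for \<mu> d
  proof -
    have mu: "\<mu> = Poly_Mapping.single False (Poly_Mapping.lookup \<mu> False) + Poly_Mapping.single True (Poly_Mapping.lookup \<mu> True)"
      by (rule poly_mapping_eqI) (auto simp: lookup_add lookup_single when_def)
    have "Poly_Mapping.single \<mu> d = kc d * (X_comm ^ Poly_Mapping.lookup \<mu> False * Y_comm ^ Poly_Mapping.lookup \<mu> True)"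
      by (subst mu) (simp add: xp yp kc_def mult_single)
    then show ?thesis using m c pw x y by simp
  qed
  have "P (\<Sum>\<mu>\<in>I. Poly_Mapping.single \<mu> (Poly_Mapping.lookup g \<mu>))" for I
  proof (induction I rule: infinite_finite_induct)
    case (infinite A) then show ?case using c[of 0] by simp
  next
    case empty then show ?case using c[of 0] by simp
  next
    case (insert x F) then show ?case using a s by simp
  qed
  from this[of "Poly_Mapping.keys g"] show ?thesis by (simp only: pm_expansion[of g, symmetric])
qed

interpretation comm: alg2 X_comm Y_comm "Poly_Mapping.single False 1" "Poly_Mapping.single True 1"
  "\<lambda>\<mu>. Poly_Mapping.lookup \<mu> False" "\<lambda>\<mu>. Poly_Mapping.lookup \<mu> True" substC
proof
  show "\<And>P g. (\<And>c. P (kc c)) \<Longrightarrow> P X_comm \<Longrightarrow> P Y_comm \<Longrightarrow> (\<And>a b. P a \<Longrightarrow> P b \<Longrightarrow> P (a + b))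
       \<Longrightarrow> (\<And>a b. P a \<Longrightarrow> P b \<Longrightarrow> P (a * b)) \<Longrightarrow> P g" by (rule genC)
  show "X_comm = Poly_Mapping.single (Poly_Mapping.single False 1) 1" by (simp add: X_comm_def)
  show "Y_comm = Poly_Mapping.single (Poly_Mapping.single True 1) 1" by (simp add: Y_comm_def)
  show "\<And>sx sy. substC sx sy X_comm = sx" by (rule substC_X)
  show "\<And>sx sy. substC sx sy Y_comm = sy" by (rule substC_Y)
  show "\<And>sx sy. kalg_endo (substC sx sy)" by (rule substC_endo)
qed (simp_all add: lookup_add lookup_single when_def)

theorem lemma2p10:
  shows "orbit_claim (X_free :: 'a::field_char_0 freealg) Y_free
       \<and> orbit_claim (X_comm :: 'a polyalg) Y_comm"
  using free.main comm.main by simp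


end
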